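(* Let $P,Q\in\mathbb P_d$ and $R=(1-t)P^{-1}+tQ^{-1}$ for some $t\in[0,1]$. Then $\operatorname{F}_R(P,Q)=\operatorname{F}^{\mathrm M}(P,Q)$.
   Context: $\mathbb P_d$ is the set of $d\times d$ complex positive definite matrices; $A\#B:=A^{1/2}(A^{-1/2}BA^{-1/2})^{1/2}A^{1/2}$. The generalized fidelity is $\operatorname{F}_R(P,Q):=\operatorname{Tr}\big[\sqrt{R^{1/2}PR^{1/2}}\,R^{-1}\sqrt{R^{1/2}QR^{1/2}}\big]$, and the Matsumoto fidelity is $\operatorname{F}^{\mathrm M}(P,Q):=\operatorname{Tr}[P\#Q]$. *)

theory Defs
  imports "Jordan_Normal_Form.Schur_Decomposition"
begin

definition mtrace :: "complex mat \<Rightarrow> complex" where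
  "mtrace A = (\<Sum>i<dim_row A. A $$ (i, i))"

definition hermitian_mat :: "complex mat \<Rightarrow> bool" where
  "hermitian_mat A \<longleftrightarrow> mat_adjoint A = A"

definition psd_mat :: "nat \<Rightarrow> complex mat \<Rightarrow> bool" where
  "psd_mat d A \<longleftrightarrow> A \<in> carrier_mat d d \<and> hermitian_mat A \<and>
     (\<forall>v \<in> carrier_vec d. Re (conjugate v \<bullet> (A *\<^sub>v v)) \<ge> 0)"

definition pd_mat :: "nat \<Rightarrow> complex mat \<Rightarrow> bool" where
  "pd_mat d A \<longleftrightarrow> A \<in> carrier_mat d d \<and> hermitian_mat A \<and>
     (\<forall>v \<in> carrier_vec d. v \<noteq> 0\<^sub>v d \<longrightarrow> Re (conjugate v \<bullet> (A *\<^sub>v v)) > 0)"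

definition mat_inv :: "nat \<Rightarrow> complex mat \<Rightarrow> complex mat" where
  "mat_inv d A = (THE B. B \<in> carrier_mat d d \<and> A * B = 1\<^sub>m d \<and> B * A = 1\<^sub>m d)"

definition mat_sqrt :: "nat \<Rightarrow> complex mat \<Rightarrow> complex mat" where
  "mat_sqrt d A = (THE B. psd_mat d B \<and> B * B = A)"

definition mat_geo_mean :: "nat \<Rightarrow> complex mat \<Rightarrow> complex mat \<Rightarrow> complex mat" where
  "mat_geo_mean d A B =
     (let Ah = mat_sqrt d A; Aih = mat_inv d Ah
      in Ah * mat_sqrt d (Aih * B * Aih) * Ah)"

definition gen_fidelity :: "nat \<Rightarrow> complex mat \<Rightarrow> complex mat \<Rightarrow> complex mat \<Rightarrow> complex" where
  "gen_fidelity d R P Q =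
     (let Rh = mat_sqrt d R
      in mtrace (mat_sqrt d (Rh * P * Rh) * mat_inv d R * mat_sqrt d (Rh * Q * Rh)))"

definition matsumoto_fidelity :: "nat \<Rightarrow> complex mat \<Rightarrow> complex mat \<Rightarrow> complex" where
  "matsumoto_fidelity d P Q = mtrace (mat_geo_mean d P Q)"

end

theory Submission imports Defs begin

abbreviation adj :: "complex mat \<Rightarrow> complex mat" where "adj \<equiv> mat_adjoint"

lemma adj_dims[simp]: "dim_row (adj A) = dim_col A" "dim_col (adj A) = dim_row A"
  unfolding mat_adjoint_def by (auto simp: mat_of_rows_def)

lemma adj_index[simp]: "i < dim_col A \<Longrightarrow> j < dim_row A \<Longrightarrow> adj A $$ (i,j) = cnj (A $$ (j,i))"
  unfolding mat_adjoint_def by (auto simp: mat_of_rows_def)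

lemma adj_carrier[simp]: "A \<in> carrier_mat m n \<Longrightarrow> adj A \<in> carrier_mat n m"
  by (metis adj_dims carrier_matD carrier_matI)

lemma adj_adj[simp]: "adj (adj A) = A"
  by (rule eq_matI, auto)

lemma adj_mult: assumes "A \<in> carrier_mat m k" "B \<in> carrier_mat k n"
  shows "adj (A * B) = adj B * adj A"
proof (rule eq_matI)
  fix i j assume i: "i < dim_row (adj B * adj A)" and j: "j < dim_col (adj B * adj A)"
  have "adj (A * B) $$ (i,j) = cnj (\<Sum>l = 0..<k. A $$ (j,l) * B $$ (l,i))"
    using assms i j by (simp add: scalar_prod_def)
  also have "\<dots> = (\<Sum>l = 0..<k. cnj (B $$ (l,i)) * cnj (A $$ (j,l)))"
    by (simp add: mult.commute)
  also have "\<dots> = (adj B * adj A) $$ (i,j)"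
    using assms i j by (simp add: scalar_prod_def)
  finally show "adj (A * B) $$ (i,j) = (adj B * adj A) $$ (i,j)" .
qed (insert assms, auto)

lemma adj_add: assumes "A \<in> carrier_mat m n" "B \<in> carrier_mat m n"
  shows "adj (A + B) = adj A + adj B"
  using assms by (intro eq_matI, auto)

lemma adj_minus: assumes "A \<in> carrier_mat m n" "B \<in> carrier_mat m n"
  shows "adj (A - B) = adj A - adj B"
  using assms by (intro eq_matI, auto)

lemma adj_smult: "adj (c \<cdot>\<^sub>m A) = cnj c \<cdot>\<^sub>m adj A"
  by (intro eq_matI, auto)

lemma adj_one[simp]: "adj (1\<^sub>m n) = 1\<^sub>m n"
  by (intro eq_matI, auto)

lemma adj_zero[simp]: "adj (0\<^sub>m m n) = 0\<^sub>m n m"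
  by (intro eq_matI, auto)

lemma adj_uminus: "adj (- A) = - adj A"
  by (intro eq_matI, auto)

lemma conj_adj_mult_vec: assumes C: "C \<in> carrier_mat n k" and v: "v \<in> carrier_vec n"
  shows "conjugate (adj C *\<^sub>v v) = transpose_mat C *\<^sub>v conjugate v"
proof (rule eq_vecI)
  fix i assume i: "i < dim_vec (transpose_mat C *\<^sub>v conjugate v)"
  hence i: "i < k" using C by simp
  have "conjugate (adj C *\<^sub>v v) $ i = cnj (\<Sum>l = 0..<n. cnj (C $$ (l,i)) * v $ l)"
    using assms i by (simp add: scalar_prod_def)
  also have "\<dots> = (\<Sum>l = 0..<n. C $$ (l,i) * cnj (v $ l))"
    by simp
  also have "\<dots> = (transpose_mat C *\<^sub>v conjugate v) $ i"
    using assms i by (simp add: scalar_prod_def)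
  finally show "conjugate (adj C *\<^sub>v v) $ i = (transpose_mat C *\<^sub>v conjugate v) $ i" .
qed (insert assms, auto)

lemma qf_move: assumes C: "C \<in> carrier_mat n k" and v: "v \<in> carrier_vec n" and x: "x \<in> carrier_vec k"
  shows "conjugate v \<bullet> (C *\<^sub>v x) = conjugate (adj C *\<^sub>v v) \<bullet> x"
  unfolding conj_adj_mult_vec[OF C v]
  by (rule transpose_vec_mult_scalar[OF C x, symmetric], insert v, auto)

lemma qf_cong: assumes C: "C \<in> carrier_mat n k" and M: "M \<in> carrier_mat k k" and v: "v \<in> carrier_vec n"
  shows "conjugate v \<bullet> ((C * M * adj C) *\<^sub>v v) = conjugate (adj C *\<^sub>v v) \<bullet> (M *\<^sub>v (adj C *\<^sub>v v))"
proof -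
  have aC: "adj C \<in> carrier_mat k n" using C by simp
  have w: "adj C *\<^sub>v v \<in> carrier_vec k" using mult_mat_vec_carrier[OF aC v] .
  have "(C * M * adj C) *\<^sub>v v = (C * M) *\<^sub>v (adj C *\<^sub>v v)"
    using C M v aC by (intro assoc_mult_mat_vec[of _ n k], auto)
  also have "\<dots> = C *\<^sub>v (M *\<^sub>v (adj C *\<^sub>v v))"
    using C M v w by (intro assoc_mult_mat_vec[of _ n k], auto)
  finally have e: "(C * M * adj C) *\<^sub>v v = C *\<^sub>v (M *\<^sub>v (adj C *\<^sub>v v))" .
  have Mw: "M *\<^sub>v (adj C *\<^sub>v v) \<in> carrier_vec k" using M w by simp
  show ?thesis unfolding e using qf_move[OF C v Mw] by simp
qed

lemma hermitianD: "hermitian_mat A \<Longrightarrow> adj A = A" unfolding hermitian_mat_def by auto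

lemma psd_carrier: "psd_mat n A \<Longrightarrow> A \<in> carrier_mat n n" unfolding psd_mat_def by auto
lemma pd_carrier: "pd_mat n A \<Longrightarrow> A \<in> carrier_mat n n" unfolding pd_mat_def by auto
lemma psd_herm: "psd_mat n A \<Longrightarrow> adj A = A" unfolding psd_mat_def hermitian_mat_def by auto
lemma pd_herm: "pd_mat n A \<Longrightarrow> adj A = A" unfolding pd_mat_def hermitian_mat_def by auto

lemma pd_psd: "pd_mat n A \<Longrightarrow> psd_mat n A"
proof -
  assume a: "pd_mat n A"
  have "0 \<le> Re (conjugate v \<bullet> (A *\<^sub>v v))" if v: "v \<in> carrier_vec n" for v
  proof (cases "v = 0\<^sub>v n")
    case True
    have "conjugate v \<bullet> (A *\<^sub>v v) = 0" unfolding True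
      using a pd_carrier[OF a] by (simp add: scalar_prod_def)
    then show ?thesis by simp
  next
    case False
    then show ?thesis using a v unfolding pd_mat_def by (auto intro: less_imp_le)
  qed
  then show ?thesis using a unfolding pd_mat_def psd_mat_def by auto
qed

lemma psd_cong: assumes M: "psd_mat k M" and C: "C \<in> carrier_mat n k"
  shows "psd_mat n (C * M * adj C)"
proof -
  have Mc: "M \<in> carrier_mat k k" and Mh: "adj M = M" using M psd_carrier psd_herm by auto
  have h: "adj (C * M * adj C) = C * M * adj C"
  proof -
    have "adj (C * M * adj C) = adj (adj C) * adj (C * M)"
      using Mc C by (intro adj_mult[of _ n k], auto)
    also have "adj (C * M) = adj M * adj C" using Mc C by (intro adj_mult, auto)
    finally show ?thesis using Mc C Mh by (simp add: assoc_mult_mat[of C n k M k "adj C" n])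
  qed
  show ?thesis unfolding psd_mat_def hermitian_mat_def
  proof (intro conjI ballI)
    show "C * M * adj C \<in> carrier_mat n n" using Mc C by auto
    show "adj (C * M * adj C) = C * M * adj C" by fact
    fix v :: "complex vec" assume v: "v \<in> carrier_vec n"
    have w: "adj C *\<^sub>v v \<in> carrier_vec k" using mult_mat_vec_carrier[OF adj_carrier[OF C] v] .
    show "0 \<le> Re (conjugate v \<bullet> ((C * M * adj C) *\<^sub>v v))"
      unfolding qf_cong[OF C Mc v] using M w unfolding psd_mat_def by auto
  qed
qed


section \<open>Unitary matrices\<close>

definition unitary :: "nat \<Rightarrow> complex mat \<Rightarrow> bool" where
  "unitary n U \<longleftrightarrow> U \<in> carrier_mat n n \<and> adj U * U = 1\<^sub>m n \<and> U * adj U = 1\<^sub>m n"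

lemma unitaryI: assumes U: "U \<in> carrier_mat n n" and h: "adj U * U = 1\<^sub>m n"
  shows "unitary n U"
  using mat_mult_left_right_inverse[OF adj_carrier[OF U] U h] U h unfolding unitary_def by auto

lemma unitaryD: assumes "unitary n U"
  shows "U \<in> carrier_mat n n" "adj U \<in> carrier_mat n n" "adj U * U = 1\<^sub>m n" "U * adj U = 1\<^sub>m n"
  using assms unfolding unitary_def by auto

lemma mult_sq[simp]: "A \<in> carrier_mat n n \<Longrightarrow> B \<in> carrier_mat n n \<Longrightarrow> A * B \<in> carrier_mat n n"
  by simp

lemma unitary_cancel: assumes U: "unitary n U" and X: "X \<in> carrier_mat n k"
  shows "adj U * (U * X) = X" "U * (adj U * X) = X"
proof -
  note u = unitaryD[OF U]
  have "adj U * (U * X) = (adj U * U) * X" by (rule assoc_mult_mat[symmetric], insert u X, auto)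
  also have "\<dots> = X" unfolding u(3) by (rule left_mult_one_mat[OF X])
  finally show "adj U * (U * X) = X" .
  have "U * (adj U * X) = (U * adj U) * X" by (rule assoc_mult_mat[symmetric], insert u X, auto)
  also have "\<dots> = X" unfolding u(4) by (rule left_mult_one_mat[OF X])
  finally show "U * (adj U * X) = X" .
qed

lemma unitary_mult: assumes U: "unitary n U" and V: "unitary n V"
  shows "unitary n (U * V)"
proof (rule unitaryI)
  note u = unitaryD[OF U] and v = unitaryD[OF V]
  show "U * V \<in> carrier_mat n n" using u v by simp
  have "adj (U * V) * (U * V) = adj V * adj U * (U * V)" using u v by (simp add: adj_mult[of _ n n])
  also have "\<dots> = adj V * (adj U * (U * V))" using u v by (simp add: assoc_mult_mat[of _ n n _ n _ n])
  also have "\<dots> = 1\<^sub>m n" using u v unitary_cancel(1)[OF U v(1)] by simp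
  finally show "adj (U * V) * (U * V) = 1\<^sub>m n" .
qed

lemma adj_mult_index: assumes "i < dim_col W" "j < dim_col W"
  shows "(adj W * W) $$ (i,j) = conjugate (col W i) \<bullet> col W j"
proof -
  have "row (adj W) i = conjugate (col W i)" using assms by (intro eq_vecI, auto)
  then show ?thesis using assms by simp
qed

lemma cscalar_smult: assumes "x \<in> carrier_vec n" "y \<in> carrier_vec n"
  shows "conjugate (a \<cdot>\<^sub>v x) \<bullet> (b \<cdot>\<^sub>v y) = cnj a * b * (conjugate x \<bullet> y)"
  using assms by (simp add: scalar_prod_def sum_distrib_left ac_simps)

lemma unitary_extend:
  fixes v :: "complex vec"
  assumes v: "v \<in> carrier_vec n" and v0: "v \<noteq> 0\<^sub>v n"
  shows "\<exists>W c. unitary n W \<and> col W 0 = c \<cdot>\<^sub>v v"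
proof -
  interpret cof_vec_space n "TYPE(complex)" .
  define b where "b = basis_completion v"
  define ws where "ws = gram_schmidt n b"
  from basis_completion[OF v v0, folded b_def]
  have dist_b: "distinct b" and indep: "\<not> lin_dep (set b)" and b: "set b \<subseteq> carrier_vec n"
    and hdb: "hd b = v" and len_b: "length b = n" by auto
  have n: "n \<noteq> 0" using v v0 by (cases n, auto)
  from hdb len_b n obtain vs where bv: "b = v # vs" by (cases b, auto)
  from gram_schmidt_result[OF b dist_b indep refl, folded ws_def]
  have ws: "set ws \<subseteq> carrier_vec n" "corthogonal ws" "length ws = n"
    by (auto simp: len_b)
  from gram_schmidt_hd[OF v, of vs, folded bv] have hdws: "hd ws = v" unfolding ws_def .
  have ws0: "ws ! 0 = v" using hdws n ws(3) by (cases ws, auto)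
  have wsi: "ws ! i \<in> carrier_vec n" if "i < n" for i using ws that by auto
  define r where "r = (\<lambda>i. Re (conjugate (ws ! i) \<bullet> (ws ! i)))"
  have ri: "conjugate (ws ! i) \<bullet> (ws ! i) = of_real (r i) \<and> r i > 0" if i: "i < n" for i
  proof -
    have nz: "ws ! i \<bullet>c ws ! i \<noteq> 0" using corthogonalD[OF ws(2), of i i] i ws(3) by auto
    have ge: "ws ! i \<bullet>c ws ! i \<ge> 0" by (rule conjugate_square_ge_0_vec)
    have eq: "ws ! i \<bullet>c ws ! i = conjugate (ws ! i) \<bullet> (ws ! i)"
      using conjugate_vec_sprod_comm[OF wsi[OF i] wsi[OF i]] .
    from ge nz have "ws ! i \<bullet>c ws ! i > 0" by auto
    then show ?thesis unfolding r_def eq[symmetric]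
      by (auto simp: less_complex_def complex_eq_iff)
  qed
  define c where "c = (\<lambda>i. complex_of_real (1 / sqrt (r i)))"
  define us where "us = map (\<lambda>i. c i \<cdot>\<^sub>v ws ! i) [0..<n]"
  define W where "W = mat_of_cols n us"
  have us: "set us \<subseteq> carrier_vec n" "length us = n" using wsi unfolding us_def by auto
  have W: "W \<in> carrier_mat n n" unfolding W_def using us by auto
  have colW: "col W i = c i \<cdot>\<^sub>v ws ! i" if "i < n" for i
    unfolding W_def using that us wsi by (subst col_mat_of_cols, auto simp: us_def)
  have "adj W * W = 1\<^sub>m n"
  proof (rule eq_matI)
    fix i j assume i: "i < dim_row (1\<^sub>m n)" and j: "j < dim_col (1\<^sub>m n)"
    hence i: "i < n" and j: "j < n" by auto
    have "(adj W * W) $$ (i,j) = conjugate (col W i) \<bullet> col W j"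
      using adj_mult_index[of i W j] W i j by auto
    also have "\<dots> = cnj (c i) * c j * (conjugate (ws ! i) \<bullet> ws ! j)"
      unfolding colW[OF i] colW[OF j] by (rule cscalar_smult[OF wsi[OF i] wsi[OF j]])
    also have "\<dots> = 1\<^sub>m n $$ (i,j)"
    proof (cases "i = j")
      case True
      have "sqrt (r j) > 0" using ri[OF j] by auto
      then show ?thesis using True ri[OF j] i unfolding c_def
        by (simp add: complex_eq_iff)
    next
      case False
      have "ws ! j \<bullet>c ws ! i = 0" using corthogonalD[OF ws(2), of j i] False i j ws(3) by auto
      hence "conjugate (ws ! i) \<bullet> ws ! j = 0"
        using conjugate_vec_sprod_comm[OF wsi[OF j] wsi[OF i]] by simp
      then show ?thesis using False i j by simp
    qed
    finally show "(adj W * W) $$ (i,j) = 1\<^sub>m n $$ (i,j)" .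
  qed (insert W, auto)
  hence "unitary n W" using unitaryI[OF W] by auto
  moreover have "col W 0 = c 0 \<cdot>\<^sub>v v" using colW[of 0] n ws0 by auto
  ultimately show ?thesis by blast
qed

lemma adj_four_block: assumes "A \<in> carrier_mat n1 m1" "B \<in> carrier_mat n1 m2" "C \<in> carrier_mat n2 m1" "D \<in> carrier_mat n2 m2"
  shows "adj (four_block_mat A B C D) = four_block_mat (adj A) (adj C) (adj B) (adj D)"
  using assms by (intro eq_matI, auto)

lemma upper_triangular_1: "A \<in> carrier_mat 1 1 \<Longrightarrow> upper_triangular A"
  by (auto simp: upper_triangular_def)

lemma schur_unitary:
  fixes A :: "complex mat"
  assumes "A \<in> carrier_mat n n"
  shows "\<exists>U T. unitary n U \<and> T \<in> carrier_mat n n \<and> upper_triangular T \<and> A = U * T * adj U"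
  using assms
proof (induction n arbitrary: A)
  case 0
  have "unitary 0 (1\<^sub>m 0)" by (intro unitaryI, auto)
  moreover have "upper_triangular A" using 0 by (auto simp: upper_triangular_def)
  moreover have "A = 1\<^sub>m 0 * A * adj (1\<^sub>m 0)" using 0 by simp
  ultimately show ?case using 0 by blast
next
  case (Suc m A)
  let ?n = "Suc m"
  have A: "A \<in> carrier_mat ?n ?n" by fact
  from char_poly_factorized[OF A] obtain as where cp: "char_poly A = (\<Prod>a\<leftarrow>as. [:- a, 1:])"
    and len: "length as = ?n" by auto
  from len obtain e es where as: "as = e # es" by (cases as, auto)
  have "poly (char_poly A) e = 0" unfolding cp as by simp
  hence "eigenvalue A e" using eigenvalue_root_char_poly[OF A] by simp
  then obtain v where ev: "eigenvector A v e" unfolding eigenvalue_def by auto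
  hence v: "v \<in> carrier_vec ?n" and v0: "v \<noteq> 0\<^sub>v ?n" and Av: "A *\<^sub>v v = e \<cdot>\<^sub>v v"
    using A unfolding eigenvector_def by auto
  from unitary_extend[OF v v0] obtain W c where W: "unitary ?n W" and W0: "col W 0 = c \<cdot>\<^sub>v v" by auto
  note w = unitaryD[OF W]
  have AW0: "A *\<^sub>v col W 0 = e \<cdot>\<^sub>v col W 0"
    unfolding W0 using mult_mat_vec[OF A v, of c] Av by (auto simp: ac_simps)
  define A' where "A' = adj W * A * W"
  have A': "A' \<in> carrier_mat ?n ?n" unfolding A'_def using w A by simp
  have cW0: "col W 0 \<in> carrier_vec ?n" using w by (intro carrier_vecI, auto)
  have A'0: "A' $$ (i,0) = (if i = 0 then e else 0)" if i: "i < ?n" for i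
  proof -
    have "A' $$ (i,0) = (adj W * (A * W)) $$ (i,0)"
      unfolding A'_def using w A by (simp add: assoc_mult_mat[of _ ?n ?n _ ?n _ ?n])
    also have "\<dots> = row (adj W) i \<bullet> col (A * W) 0" using w A i by simp
    also have "col (A * W) 0 = A *\<^sub>v col W 0" using w A by (intro eq_vecI, auto)
    also have "row (adj W) i = conjugate (col W i)" using w i by (intro eq_vecI, auto)
    also have "conjugate (col W i) \<bullet> (A *\<^sub>v col W 0) = e * (conjugate (col W i) \<bullet> col W 0)"
      unfolding AW0 using w i cW0 by (intro scalar_prod_smult_distrib[of _ ?n], auto)
    also have "conjugate (col W i) \<bullet> col W 0 = (adj W * W) $$ (i, 0)"
      using adj_mult_index[of i W 0] w i by auto
    also have "\<dots> = (if i = 0 then 1 else 0)" unfolding w(3) using i by simp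
    finally show ?thesis by simp
  qed
  obtain A1 A2 A0 A3 where sp: "split_block A' 1 1 = (A1,A2,A0,A3)" by (cases "split_block A' 1 1", auto)
  have dA': "dim_row A' = 1 + m" "dim_col A' = 1 + m" using A' by auto
  note spl = split_block[OF sp dA']
  have A0: "A0 = 0\<^sub>m m 1"
    using sp A'0 A' unfolding split_block_def Let_def by (intro eq_matI, auto)
  from Suc.IH[OF spl(4)] obtain U3 T3 where U3: "unitary m U3" and T3: "T3 \<in> carrier_mat m m"
    and ut3: "upper_triangular T3" and A3: "A3 = U3 * T3 * adj U3" by auto
  note u3 = unitaryD[OF U3]
  define B where "B = four_block_mat (1\<^sub>m 1) (0\<^sub>m 1 m) (0\<^sub>m m 1) U3"
  have B: "B \<in> carrier_mat ?n ?n" unfolding B_def using u3 by (metis four_block_carrier_mat one_carrier_mat plus_1_eq_Suc)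
  have adjB: "adj B = four_block_mat (1\<^sub>m 1) (0\<^sub>m 1 m) (0\<^sub>m m 1) (adj U3)"
    unfolding B_def by (subst adj_four_block[of _ 1 1 _ m _ m], insert u3, auto)
  have "adj B * B = four_block_mat (1\<^sub>m 1) (0\<^sub>m 1 m) (0\<^sub>m m 1) (1\<^sub>m m)"
    unfolding adjB unfolding B_def
    by (subst mult_four_block_mat[of _ 1 1 _ m _ m _ _ 1 _ m], insert u3, auto)
  hence "adj B * B = 1\<^sub>m ?n" by simp
  hence UB: "unitary ?n B" using unitaryI[OF B] by auto
  define U where "U = W * B"
  define T where "T = four_block_mat A1 (A2 * U3) (0\<^sub>m m 1) T3"
  have U: "unitary ?n U" unfolding U_def by (rule unitary_mult[OF W UB])
  have T: "T \<in> carrier_mat ?n ?n" unfolding T_def using spl T3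
    by (metis four_block_carrier_mat plus_1_eq_Suc)
  have utT: "upper_triangular T" unfolding T_def
    by (rule upper_triangular_four_block[OF spl(1) T3 upper_triangular_1[OF spl(1)] ut3])
  have BT: "B * T = four_block_mat A1 (A2 * U3) (0\<^sub>m m 1) (U3 * T3)"
    unfolding B_def T_def
    by (subst mult_four_block_mat[of _ 1 1 _ m _ m _ _ 1 _ m], insert u3 spl T3, auto)
  have "B * T * adj B = four_block_mat A1 (A2 * U3 * adj U3) (0\<^sub>m m 1) (U3 * T3 * adj U3)"
    unfolding BT adjB
    by (subst mult_four_block_mat[of _ 1 1 _ m _ m _ _ 1 _ m], insert u3 spl T3, auto)
  also have "A2 * U3 * adj U3 = A2" using u3 spl by (simp add: assoc_mult_mat[of _ 1 m _ m _ m])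
  also have "four_block_mat A1 A2 (0\<^sub>m m 1) (U3 * T3 * adj U3) = A'"
    using spl(5) A0 A3 by simp
  finally have BTB: "B * T * adj B = A'" .
  have "U * T * adj U = W * (B * T * adj B) * adj W"
    unfolding U_def using w B T adj_carrier[OF B]
    by (simp add: adj_mult[of _ ?n ?n] assoc_mult_mat[of _ ?n ?n _ ?n _ ?n])
  also have "\<dots> = A"
    unfolding BTB A'_def using w A unitary_cancel(2)[OF W A] by (simp add: assoc_mult_mat[of _ ?n ?n _ ?n _ ?n])
  finally show ?case using U T utT by metis
qed


section \<open>Spectral decomposition of Hermitian matrices\<close>

definition dmat :: "nat \<Rightarrow> (nat \<Rightarrow> real) \<Rightarrow> complex mat" where
  "dmat n f = mat n n (\<lambda>(i,j). if i = j then complex_of_real (f i) else 0)"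

lemma dmat_carrier[simp]: "dmat n f \<in> carrier_mat n n" unfolding dmat_def by auto
lemma dmat_dims[simp]: "dim_row (dmat n f) = n" "dim_col (dmat n f) = n" unfolding dmat_def by auto
lemma dmat_index[simp]: "i < n \<Longrightarrow> j < n \<Longrightarrow> dmat n f $$ (i,j) = (if i = j then complex_of_real (f i) else 0)"
  unfolding dmat_def by auto

lemma adj_dmat[simp]: "adj (dmat n f) = dmat n f" by (intro eq_matI, auto)

lemma dmat_mult_dmat: "dmat n f * dmat n g = dmat n (\<lambda>i. f i * g i)"
proof (rule eq_matI)
  fix i j assume "i < dim_row (dmat n (\<lambda>i. f i * g i))" "j < dim_col (dmat n (\<lambda>i. f i * g i))"
  hence i: "i < n" and j: "j < n" by auto
  have "(dmat n f * dmat n g) $$ (i,j) = (\<Sum>l = 0..<n. dmat n f $$ (i,l) * dmat n g $$ (l,j))"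
    using i j by (simp add: scalar_prod_def)
  also have "\<dots> = (\<Sum>l \<in> {i}. dmat n f $$ (i,l) * dmat n g $$ (l,j))"
    using i j by (intro sum.mono_neutral_right, auto)
  also have "\<dots> = dmat n (\<lambda>i. f i * g i) $$ (i,j)" using i j by simp
  finally show "(dmat n f * dmat n g) $$ (i,j) = dmat n (\<lambda>i. f i * g i) $$ (i,j)" .
qed auto

lemma mult_dmat_index: assumes Y: "Y \<in> carrier_mat n n" and i: "i < n" and j: "j < n"
  shows "(Y * dmat n f) $$ (i,j) = Y $$ (i,j) * f j"
    "(dmat n f * Y) $$ (i,j) = f i * Y $$ (i,j)"
proof -
  have "(Y * dmat n f) $$ (i,j) = (\<Sum>l = 0..<n. Y $$ (i,l) * dmat n f $$ (l,j))"
    using Y i j by (simp add: scalar_prod_def)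
  also have "\<dots> = (\<Sum>l \<in> {j}. Y $$ (i,l) * dmat n f $$ (l,j))"
    using i j by (intro sum.mono_neutral_right, auto)
  finally show "(Y * dmat n f) $$ (i,j) = Y $$ (i,j) * f j" using j by simp
  have "(dmat n f * Y) $$ (i,j) = (\<Sum>l = 0..<n. dmat n f $$ (i,l) * Y $$ (l,j))"
    using Y i j by (simp add: scalar_prod_def)
  also have "\<dots> = (\<Sum>l \<in> {i}. dmat n f $$ (i,l) * Y $$ (l,j))"
    using i j by (intro sum.mono_neutral_right, auto)
  finally show "(dmat n f * Y) $$ (i,j) = f i * Y $$ (i,j)" using i by simp
qed

lemma dmat_one: "dmat n (\<lambda>_. 1) = 1\<^sub>m n" by (intro eq_matI, auto)

lemma spectral:
  assumes A: "A \<in> carrier_mat n n" and h: "adj A = A"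
  shows "\<exists>U f. unitary n U \<and> A = U * dmat n f * adj U"
proof -
  from schur_unitary[OF A] obtain U T where U: "unitary n U" and T: "T \<in> carrier_mat n n"
    and ut: "upper_triangular T" and AT: "A = U * T * adj U" by auto
  note u = unitaryD[OF U]
  have TA: "T = adj U * A * U"
  proof -
    have "adj U * A * U = T" unfolding AT using u T unitary_cancel(1)[OF U T]
      by (simp add: assoc_mult_mat[of _ n n _ n _ n])
    then show ?thesis by simp
  qed
  have hT: "adj T = T" unfolding TA using u A h
    by (simp add: adj_mult[of _ n n _ n] assoc_mult_mat[of _ n n _ n _ n])
  define f where "f = (\<lambda>i. Re (T $$ (i,i)))"
  have "T = dmat n f"
  proof (rule eq_matI)
    fix i j assume "i < dim_row (dmat n f)" "j < dim_col (dmat n f)"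
    hence i: "i < n" and j: "j < n" by auto
    have cj: "T $$ (i,j) = cnj (T $$ (j,i))"
      using arg_cong[OF hT, of "\<lambda>M. M $$ (i,j)"] T i j by simp
    show "T $$ (i,j) = dmat n f $$ (i,j)"
    proof (cases "i = j")
      case True
      then show ?thesis using cj i unfolding f_def by (simp add: complex_eq_iff)
    next
      case False
      show ?thesis
      proof (cases "j < i")
        case True then show ?thesis using ut i T False by auto
      next
        case ji: False
        hence "T $$ (j,i) = 0" using ut j T False by auto
        then show ?thesis using cj i j False by simp
      qed
    qed
  qed (insert T, auto)
  then show ?thesis using AT U by blast
qed


lemma mat_eq_vec: fixes A B :: "complex mat" assumes A: "A \<in> carrier_mat n n" and B: "B \<in> carrier_mat n n"
  and h: "\<And>v. v \<in> carrier_vec n \<Longrightarrow> A *\<^sub>v v = B *\<^sub>v v"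
  shows "A = B"
proof (rule eq_matI)
  fix i j assume "i < dim_row B" "j < dim_col B"
  hence i: "i < n" and j: "j < n" using B by auto
  have "A $$ (i,j) = (A *\<^sub>v unit_vec n j) $ i" using A i j by simp
  also have "\<dots> = (B *\<^sub>v unit_vec n j) $ i" using h[of "unit_vec n j"] by simp
  also have "\<dots> = B $$ (i,j)" using B i j by simp
  finally show "A $$ (i,j) = B $$ (i,j)" .
qed (insert A B, auto)

lemma mult3_vec: assumes C: "C \<in> carrier_mat n k" and M: "M \<in> carrier_mat k k" and v: "v \<in> carrier_vec n"
  shows "(C * M * adj C) *\<^sub>v v = C *\<^sub>v (M *\<^sub>v (adj C *\<^sub>v v))"
proof -
  have aC: "adj C \<in> carrier_mat k n" using C by simp
  have w: "adj C *\<^sub>v v \<in> carrier_vec k" using mult_mat_vec_carrier[OF aC v] .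
  have "(C * M * adj C) *\<^sub>v v = (C * M) *\<^sub>v (adj C *\<^sub>v v)"
    using C M v aC by (intro assoc_mult_mat_vec[of _ n k], auto)
  also have "\<dots> = C *\<^sub>v (M *\<^sub>v (adj C *\<^sub>v v))"
    using C M v w by (intro assoc_mult_mat_vec[of _ n k], auto)
  finally show ?thesis .
qed

lemma dmat_mult_vec: assumes w: "w \<in> carrier_vec n"
  shows "dmat n f *\<^sub>v w = vec n (\<lambda>i. complex_of_real (f i) * w $ i)"
proof (rule eq_vecI)
  fix i assume "i < dim_vec (vec n (\<lambda>i. complex_of_real (f i) * w $ i))"
  hence i: "i < n" by simp
  have r: "row (dmat n f) i = complex_of_real (f i) \<cdot>\<^sub>v unit_vec n i"
    using i by (intro eq_vecI, auto)
  show "(dmat n f *\<^sub>v w) $ i = vec n (\<lambda>i. complex_of_real (f i) * w $ i) $ i"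
    using i w by (simp add: r)
qed simp

lemma cnj_mult_self: "cnj z * (complex_of_real a * z) = complex_of_real (a * (cmod z)\<^sup>2)"
  using complex_norm_square[of z] by (simp add: ac_simps)

lemma qf_dmat: assumes w: "w \<in> carrier_vec n"
  shows "conjugate w \<bullet> (dmat n f *\<^sub>v w) = complex_of_real (\<Sum>i = 0..<n. f i * (cmod (w $ i))\<^sup>2)"
proof -
  have "conjugate w \<bullet> (dmat n f *\<^sub>v w) = (\<Sum>i = 0..<n. cnj (w $ i) * (complex_of_real (f i) * w $ i))"
    unfolding dmat_mult_vec[OF w] using w by (simp add: scalar_prod_def)
  also have "\<dots> = (\<Sum>i = 0..<n. complex_of_real (f i * (cmod (w $ i))\<^sup>2))"
    by (simp add: cnj_mult_self)
  finally show ?thesis by simp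
qed

lemma psd_dmat: assumes "\<And>i. i < n \<Longrightarrow> f i \<ge> 0" shows "psd_mat n (dmat n f)"
  unfolding psd_mat_def hermitian_mat_def
proof (intro conjI ballI)
  fix v :: "complex vec" assume v: "v \<in> carrier_vec n"
  show "0 \<le> Re (conjugate v \<bullet> (dmat n f *\<^sub>v v))" unfolding qf_dmat[OF v] using assms
    by (auto intro!: sum_nonneg mult_nonneg_nonneg)
qed auto

lemma pd_dmat: assumes "\<And>i. i < n \<Longrightarrow> f i > 0" shows "pd_mat n (dmat n f)"
  unfolding pd_mat_def hermitian_mat_def
proof (intro conjI ballI impI)
  fix v :: "complex vec" assume v: "v \<in> carrier_vec n" and v0: "v \<noteq> 0\<^sub>v n"
  obtain i where i: "i < n" and vi: "v $ i \<noteq> 0"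
    using v v0 by (metis carrier_vecD eq_vecI index_zero_vec(1) index_zero_vec(2))
  have nn: "\<forall>j\<in>{0..<n}. 0 \<le> f j * (cmod (v $ j))\<^sup>2"
  proof
    fix j assume "j \<in> {0..<n}" hence "0 \<le> f j" using assms by (simp add: less_imp_le)
    thus "0 \<le> f j * (cmod (v $ j))\<^sup>2" by simp
  qed
  have "0 < f i * (cmod (v $ i))\<^sup>2" using assms[OF i] vi by simp
  hence "0 < (\<Sum>i = 0..<n. f i * (cmod (v $ i))\<^sup>2)"
    using sum_pos2[of "{0..<n}" i "\<lambda>j. f j * (cmod (v $ j))\<^sup>2"] nn i by auto
  then show "0 < Re (conjugate v \<bullet> (dmat n f *\<^sub>v v))" unfolding qf_dmat[OF v] by simp
qed auto

lemma adjU_colU: assumes U: "unitary n U" and i: "i < n"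
  shows "adj U *\<^sub>v col U i = unit_vec n i"
proof (rule eq_vecI)
  note u = unitaryD[OF U]
  fix j assume "j < dim_vec (unit_vec n i)"
  hence j: "j < n" by simp
  have a: "(adj U * U) $$ (j,i) = row (adj U) j \<bullet> col U i" using u i j by (intro index_mult_mat(1), auto)
  have b: "(adj U *\<^sub>v col U i) $ j = row (adj U) j \<bullet> col U i" using u j by auto
  have "(adj U *\<^sub>v col U i) $ j = (adj U * U) $$ (j,i)" using a b by simp
  also have "\<dots> = unit_vec n i $ j" unfolding u(3) using i j by simp
  finally show "(adj U *\<^sub>v col U i) $ j = unit_vec n i $ j" .
qed (insert unitaryD[OF U], simp)

lemma qf_spec: assumes U: "unitary n U" and v: "v \<in> carrier_vec n"
  shows "conjugate v \<bullet> ((U * dmat n f * adj U) *\<^sub>v v)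
     = complex_of_real (\<Sum>j = 0..<n. f j * (cmod ((adj U *\<^sub>v v) $ j))\<^sup>2)"
proof -
  note u = unitaryD[OF U]
  have w: "adj U *\<^sub>v v \<in> carrier_vec n" using mult_mat_vec_carrier[OF u(2) v] .
  show ?thesis unfolding qf_cong[OF u(1) dmat_carrier v] qf_dmat[OF w] ..
qed

lemma spec_coeff: assumes U: "unitary n U" and i: "i < n"
  shows "Re (conjugate (col U i) \<bullet> ((U * dmat n f * adj U) *\<^sub>v col U i)) = f i"
proof -
  note u = unitaryD[OF U]
  have c: "col U i \<in> carrier_vec n" using u i by (intro carrier_vecI, auto)
  have "(\<Sum>j = 0..<n. f j * (cmod (unit_vec n i $ j))\<^sup>2) = (\<Sum>j \<in> {i}. f j * (cmod (unit_vec n i $ j))\<^sup>2)"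
    by (rule sum.mono_neutral_right, insert i, auto)
  also have "\<dots> = f i" using i by simp
  finally show ?thesis unfolding qf_spec[OF U c] adjU_colU[OF U i] by simp
qed

lemma colU_nz: assumes U: "unitary n U" and i: "i < n" shows "col U i \<noteq> 0\<^sub>v n"
proof
  assume "col U i = 0\<^sub>v n"
  hence "adj U *\<^sub>v col U i = 0\<^sub>v n" using unitaryD[OF U] by (intro eq_vecI, auto)
  moreover have "unit_vec n i \<noteq> (0\<^sub>v n :: complex vec)" using unit_vec_nonzero[OF i] .
  ultimately show False using adjU_colU[OF U i] by simp
qed

lemma spec_nonneg: assumes U: "unitary n U" and A: "A = U * dmat n f * adj U" and p: "psd_mat n A"
  and i: "i < n" shows "f i \<ge> 0"
proof -
  have c: "col U i \<in> carrier_vec n" using unitaryD[OF U] i by (intro carrier_vecI, auto)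
  show ?thesis using p c spec_coeff[OF U i, of f] unfolding psd_mat_def A by auto
qed

lemma spec_pos: assumes U: "unitary n U" and A: "A = U * dmat n f * adj U" and p: "pd_mat n A"
  and i: "i < n" shows "f i > 0"
proof -
  have c: "col U i \<in> carrier_vec n" using unitaryD[OF U] i by (intro carrier_vecI, auto)
  show ?thesis using p c colU_nz[OF U i] spec_coeff[OF U i, of f] unfolding pd_mat_def A by auto
qed

lemma spec_psd: assumes U: "unitary n U" and f: "\<And>i. i < n \<Longrightarrow> f i \<ge> 0"
  shows "psd_mat n (U * dmat n f * adj U)"
  using psd_cong[OF psd_dmat[OF f] unitaryD(1)[OF U]] .

lemma spec_pd: assumes U: "unitary n U" and f: "\<And>i. i < n \<Longrightarrow> f i > 0"
  shows "pd_mat n (U * dmat n f * adj U)"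
proof -
  note u = unitaryD[OF U]
  have ps: "psd_mat n (U * dmat n f * adj U)" using spec_psd[OF U] f by (simp add: less_imp_le)
  show ?thesis unfolding pd_mat_def
  proof (intro conjI ballI impI)
    show "U * dmat n f * adj U \<in> carrier_mat n n" using u by simp
    show "hermitian_mat (U * dmat n f * adj U)" using ps unfolding psd_mat_def by auto
    fix v :: "complex vec" assume v: "v \<in> carrier_vec n" and v0: "v \<noteq> 0\<^sub>v n"
    have w: "adj U *\<^sub>v v \<in> carrier_vec n" using mult_mat_vec_carrier[OF u(2) v] .
    have "U *\<^sub>v (adj U *\<^sub>v v) = (U * adj U) *\<^sub>v v" by (rule assoc_mult_mat_vec[symmetric], insert u v, auto)
    also have "\<dots> = v" unfolding u(4) using v by simp
    finally have "U *\<^sub>v (adj U *\<^sub>v v) = v" .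
    moreover have "U *\<^sub>v 0\<^sub>v n = 0\<^sub>v n" using u by (intro eq_vecI, auto)
    ultimately have w0: "adj U *\<^sub>v v \<noteq> 0\<^sub>v n" using v0 by metis
    have "pd_mat n (dmat n f)" by (rule pd_dmat[OF f])
    hence "0 < Re (conjugate (adj U *\<^sub>v v) \<bullet> (dmat n f *\<^sub>v (adj U *\<^sub>v v)))"
      using w w0 unfolding pd_mat_def by auto
    then show "0 < Re (conjugate v \<bullet> ((U * dmat n f * adj U) *\<^sub>v v))"
      unfolding qf_cong[OF u(1) dmat_carrier v] .
  qed
qed

lemma psd_spec: assumes "psd_mat n A"
  shows "\<exists>U f. unitary n U \<and> (\<forall>i<n. f i \<ge> 0) \<and> A = U * dmat n f * adj U"
proof -
  from spectral[OF psd_carrier[OF assms] psd_herm[OF assms]] obtain U f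
    where U: "unitary n U" and A: "A = U * dmat n f * adj U" by auto
  with spec_nonneg[OF U A assms] show ?thesis by blast
qed

lemma pd_spec: assumes "pd_mat n A"
  shows "\<exists>U f. unitary n U \<and> (\<forall>i<n. f i > 0) \<and> A = U * dmat n f * adj U"
proof -
  from spectral[OF pd_carrier[OF assms] pd_herm[OF assms]] obtain U f
    where U: "unitary n U" and A: "A = U * dmat n f * adj U" by auto
  with spec_pos[OF U A assms] show ?thesis by blast
qed

lemma dmat_cong: "(\<And>i. i < n \<Longrightarrow> f i = g i) \<Longrightarrow> dmat n f = dmat n g"
  by (intro eq_matI, auto)

lemma conj_mult: assumes U: "unitary n U" and M1: "M1 \<in> carrier_mat n n" and M2: "M2 \<in> carrier_mat n n"
  shows "(U * M1 * adj U) * (U * M2 * adj U) = U * (M1 * M2) * adj U"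
proof -
  note u = unitaryD[OF U]
  have "(U * M1 * adj U) * (U * M2 * adj U) = U * (M1 * (adj U * (U * (M2 * adj U))))"
    using u M1 M2 by (simp add: assoc_mult_mat[of _ n n _ n _ n])
  also have "adj U * (U * (M2 * adj U)) = M2 * adj U" using unitary_cancel(1)[OF U mult_sq[OF M2 u(2)]] .
  finally show ?thesis using u M1 M2 by (simp add: assoc_mult_mat[of _ n n _ n _ n])
qed

lemma conj_inj: assumes U: "unitary n U" and M1: "M1 \<in> carrier_mat n n" and M2: "M2 \<in> carrier_mat n n"
  and eq: "U * M1 * adj U = U * M2 * adj U"
  shows "M1 = M2"
proof -
  note u = unitaryD[OF U]
  have key: "adj U * (U * M * adj U) * U = M" if M: "M \<in> carrier_mat n n" for M
  proof -
    have "adj U * (U * M * adj U) * U = adj U * (U * (M * (adj U * U)))"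
      using u M by (simp add: assoc_mult_mat[of _ n n _ n _ n])
    also have "\<dots> = M" unfolding u(3) using unitary_cancel(1)[OF U M] M by simp
    finally show ?thesis .
  qed
  show ?thesis using key[OF M1] key[OF M2] eq by metis
qed

lemma commute_spec:
  assumes U: "unitary n U" and X: "X \<in> carrier_mat n n"
  and comm: "X * (U * dmat n f * adj U) = (U * dmat n f * adj U) * X"
  and fg: "\<And>i j. i < n \<Longrightarrow> j < n \<Longrightarrow> f i = f j \<Longrightarrow> g i = g j"
  shows "X * (U * dmat n g * adj U) = (U * dmat n g * adj U) * X"
proof -
  note u = unitaryD[OF U]
  define Y where "Y = adj U * X * U"
  have Y: "Y \<in> carrier_mat n n" unfolding Y_def using u X by simp
  have XY: "X = U * Y * adj U"
  proof -
    have "U * Y * adj U = U * (adj U * (X * (U * adj U)))" unfolding Y_def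
      using u X by (simp add: assoc_mult_mat[of _ n n _ n _ n])
    also have "\<dots> = X" unfolding u(4) using unitary_cancel(2)[OF U X] X by simp
    finally show ?thesis by simp
  qed
  have e: "U * (Y * dmat n f) * adj U = U * (dmat n f * Y) * adj U"
    using comm unfolding XY conj_mult[OF U Y dmat_carrier] conj_mult[OF U dmat_carrier Y] .
  have YD: "Y * dmat n f = dmat n f * Y" by (rule conj_inj[OF U _ _ e]) (use Y in auto)
  have YG: "Y * dmat n g = dmat n g * Y"
  proof (rule eq_matI)
    fix i j assume "i < dim_row (dmat n g * Y)" "j < dim_col (dmat n g * Y)"
    hence i: "i < n" and j: "j < n" using Y by auto
    have e: "Y $$ (i,j) * f j = f i * Y $$ (i,j)"
      using arg_cong[OF YD, of "\<lambda>M. M $$ (i,j)"] unfolding mult_dmat_index[OF Y i j] .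
    show "(Y * dmat n g) $$ (i,j) = (dmat n g * Y) $$ (i,j)"
      unfolding mult_dmat_index[OF Y i j]
    proof (cases "Y $$ (i,j) = 0")
      case False
      with e have "f i = f j" by (simp add: mult.commute)
      then show "Y $$ (i, j) * complex_of_real (g j) = complex_of_real (g i) * Y $$ (i, j)"
        using fg[OF i j] by (simp add: mult.commute)
    qed simp
  qed (insert Y, auto)
  show ?thesis unfolding XY conj_mult[OF U Y dmat_carrier] conj_mult[OF U dmat_carrier Y] YG ..
qed


section \<open>Square roots and inverses\<close>

lemma spec_sqrt: assumes U: "unitary n U" and f: "\<And>i. i < n \<Longrightarrow> f i \<ge> 0"
  shows "(U * dmat n (\<lambda>i. sqrt (f i)) * adj U) * (U * dmat n (\<lambda>i. sqrt (f i)) * adj U) = U * dmat n f * adj U"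
  unfolding conj_mult[OF U dmat_carrier dmat_carrier] dmat_mult_dmat
  using f by (intro arg_cong[of _ _ "\<lambda>M. U * M * adj U"] dmat_cong, simp)

lemma sqrt_exists: assumes "psd_mat n A" shows "\<exists>B. psd_mat n B \<and> B * B = A"
proof -
  from psd_spec[OF assms] obtain U f where U: "unitary n U" and f: "\<forall>i<n. f i \<ge> 0"
    and A: "A = U * dmat n f * adj U" by auto
  have "psd_mat n (U * dmat n (\<lambda>i. sqrt (f i)) * adj U)" by (rule spec_psd[OF U], insert f, simp)
  moreover have "(U * dmat n (\<lambda>i. sqrt (f i)) * adj U) * (U * dmat n (\<lambda>i. sqrt (f i)) * adj U) = A"
    unfolding A by (rule spec_sqrt[OF U], insert f, simp)
  ultimately have "psd_mat n (U * dmat n (\<lambda>i. sqrt (f i)) * adj U) \<and>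
    (U * dmat n (\<lambda>i. sqrt (f i)) * adj U) * (U * dmat n (\<lambda>i. sqrt (f i)) * adj U) = A" by (rule conjI)
  thus ?thesis by (rule exI)
qed

lemma sq_eq_nonneg: assumes "(a::real) \<ge> 0" "b \<ge> 0" "a * a = b * b" shows "a = b"
proof -
  have "(a - b) * (a + b) = 0" using assms(3) by (simp add: algebra_simps)
  hence "a - b = 0 \<or> a + b = 0" by simp
  thus ?thesis using assms by auto
qed

lemma psd_commute_sqrt: assumes B: "psd_mat n B" and X: "X \<in> carrier_mat n n"
  and comm: "X * (B * B) = (B * B) * X"
  shows "X * B = B * X"
proof -
  from psd_spec[OF B] obtain U b where U: "unitary n U" and b: "\<forall>i<n. b i \<ge> 0"
    and Bd: "B = U * dmat n b * adj U" by auto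
  have BB: "B * B = U * dmat n (\<lambda>i. b i * b i) * adj U"
    unfolding Bd conj_mult[OF U dmat_carrier dmat_carrier] dmat_mult_dmat ..
  show ?thesis unfolding Bd
  proof (rule commute_spec[OF U X comm[unfolded BB]])
    fix i j assume i: "i < n" and j: "j < n" and e: "b i * b i = b j * b j"
    have "b i \<ge> 0" "b j \<ge> 0" using b i j by auto
    then show "b i = b j" using sq_eq_nonneg e by blast
  qed
qed

lemma psd_qf_zero: assumes B: "psd_mat n B" and w: "w \<in> carrier_vec n"
  and z: "Re (conjugate w \<bullet> (B *\<^sub>v w)) = 0"
  shows "B *\<^sub>v w = 0\<^sub>v n"
proof -
  from psd_spec[OF B] obtain U b where U: "unitary n U" and b: "\<forall>i<n. b i \<ge> 0"
    and Bd: "B = U * dmat n b * adj U" by auto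
  note u = unitaryD[OF U]
  define x where "x = adj U *\<^sub>v w"
  have x: "x \<in> carrier_vec n" unfolding x_def using mult_mat_vec_carrier[OF u(2) w] .
  have "(\<Sum>j = 0..<n. b j * (cmod (x $ j))\<^sup>2) = 0"
    using z unfolding Bd qf_spec[OF U w] x_def by simp
  hence "\<forall>j\<in>{0..<n}. b j * (cmod (x $ j))\<^sup>2 = 0"
    by (subst (asm) sum_nonneg_eq_0_iff, insert b, auto)
  hence bx: "\<And>j. j < n \<Longrightarrow> complex_of_real (b j) * x $ j = 0" by auto
  have dx: "dmat n b *\<^sub>v x = 0\<^sub>v n" unfolding dmat_mult_vec[OF x] using bx by (intro eq_vecI, auto)
  have "B *\<^sub>v w = U *\<^sub>v (dmat n b *\<^sub>v x)" unfolding Bd x_def by (rule mult3_vec[OF u(1) dmat_carrier w])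
  also have "\<dots> = 0\<^sub>v n" unfolding dx using u by (intro eq_vecI, auto)
  finally show ?thesis .
qed

lemma sqrt_unique: assumes B: "psd_mat n B" and C: "psd_mat n C" and eq: "B * B = C * C"
  shows "B = C"
proof -
  have Bc: "B \<in> carrier_mat n n" and Cc: "C \<in> carrier_mat n n" using B C psd_carrier by auto
  have hB: "adj B = B" and hC: "adj C = C" using B C psd_herm by auto
  have "B * (C * C) = (C * C) * B" unfolding eq[symmetric] using Bc by simp
  hence comm: "B * C = C * B" by (rule psd_commute_sqrt[OF C Bc])
  show ?thesis
  proof (rule mat_eq_vec[OF Bc Cc])
    fix v :: "complex vec" assume v: "v \<in> carrier_vec n"
    define a where "a = (B * B) *\<^sub>v v"
    define b where "b = (B * C) *\<^sub>v v"
    have a: "a \<in> carrier_vec n" and b: "b \<in> carrier_vec n" unfolding a_def b_def using Bc Cc v by auto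
    define w where "w = B *\<^sub>v v - C *\<^sub>v v"
    have Bv: "B *\<^sub>v v \<in> carrier_vec n" and Cv: "C *\<^sub>v v \<in> carrier_vec n" using Bc Cc v by auto
    have w: "w \<in> carrier_vec n" unfolding w_def using Bv Cv by simp
    have Bw: "B *\<^sub>v w = a - b" unfolding w_def a_def b_def
      using Bc Cc v Bv Cv by (simp add: mult_minus_distrib_mat_vec[OF Bc Bv Cv])
    have Cw: "C *\<^sub>v w = b - a" unfolding w_def a_def b_def eq comm
      using Bc Cc v Bv Cv by (simp add: mult_minus_distrib_mat_vec[OF Cc Bv Cv])
    have "conjugate w \<bullet> (B *\<^sub>v w) + conjugate w \<bullet> (C *\<^sub>v w) = conjugate w \<bullet> (B *\<^sub>v w + C *\<^sub>v w)"
      by (rule scalar_prod_add_distrib[symmetric, of _ n], insert w Bc Cc, auto)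
    also have "B *\<^sub>v w + C *\<^sub>v w = 0\<^sub>v n" unfolding Bw Cw using a b by (intro eq_vecI, auto)
    also have "conjugate w \<bullet> 0\<^sub>v n = 0" using w by simp
    finally have s0: "conjugate w \<bullet> (B *\<^sub>v w) + conjugate w \<bullet> (C *\<^sub>v w) = 0" .
    have g1: "Re (conjugate w \<bullet> (B *\<^sub>v w)) \<ge> 0" using B w unfolding psd_mat_def by auto
    have g2: "Re (conjugate w \<bullet> (C *\<^sub>v w)) \<ge> 0" using C w unfolding psd_mat_def by auto
    from s0 have "Re (conjugate w \<bullet> (B *\<^sub>v w)) + Re (conjugate w \<bullet> (C *\<^sub>v w)) = 0"
      by (metis plus_complex.sel(1) zero_complex.sel(1))
    hence z1: "Re (conjugate w \<bullet> (B *\<^sub>v w)) = 0" and z2: "Re (conjugate w \<bullet> (C *\<^sub>v w)) = 0"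
      using g1 g2 by auto
    have Bw0: "B *\<^sub>v w = 0\<^sub>v n" by (rule psd_qf_zero[OF B w z1])
    have Cw0: "C *\<^sub>v w = 0\<^sub>v n" by (rule psd_qf_zero[OF C w z2])
    have "conjugate w \<bullet> w = conjugate w \<bullet> (B *\<^sub>v v) - conjugate w \<bullet> (C *\<^sub>v v)"
      unfolding w_def by (rule scalar_prod_minus_distrib[of _ n], insert w Bv Cv, auto)
    also have "conjugate w \<bullet> (B *\<^sub>v v) = conjugate (adj B *\<^sub>v w) \<bullet> v" by (rule qf_move[OF Bc w v])
    also have "\<dots> = 0" unfolding hB Bw0 using v by simp
    also have "conjugate w \<bullet> (C *\<^sub>v v) = conjugate (adj C *\<^sub>v w) \<bullet> v" by (rule qf_move[OF Cc w v])
    also have "\<dots> = 0" unfolding hC Cw0 using v by simp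
    finally have "conjugate w \<bullet> w = 0" by simp
    hence "w \<bullet>c w = 0" using conjugate_vec_sprod_comm[OF w w] by simp
    hence "w = 0\<^sub>v n" using conjugate_square_eq_0_vec[OF w] by simp
    thus "B *\<^sub>v v = C *\<^sub>v v" unfolding w_def using Bv Cv
      by (metis carrier_vecD index_minus_vec(1) index_zero_vec(1) eq_vecI right_minus_eq)
  qed
qed

lemma mat_inv_eq: fixes A B :: "complex mat"
  assumes A: "A \<in> carrier_mat n n" and B: "B \<in> carrier_mat n n" and AB: "A * B = 1\<^sub>m n"
  shows "mat_inv n A = B"
  unfolding mat_inv_def
proof (rule the_equality)
  show "B \<in> carrier_mat n n \<and> A * B = 1\<^sub>m n \<and> B * A = 1\<^sub>m n"
    using mat_mult_left_right_inverse[OF A B AB] B AB by auto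
  fix B' assume h: "B' \<in> carrier_mat n n \<and> A * B' = 1\<^sub>m n \<and> B' * A = 1\<^sub>m n"
  hence B': "B' \<in> carrier_mat n n" and B'A: "B' * A = 1\<^sub>m n" by auto
  have "B' = B' * (A * B)" unfolding AB using B' right_mult_one_mat[of B' n n] by simp
  also have "\<dots> = (B' * A) * B" using B' A B by (simp add: assoc_mult_mat[of B' n n A n B n])
  also have "\<dots> = B" unfolding B'A using B by simp
  finally show "B' = B" .
qed

lemma mat_sqrt_eq: assumes B: "psd_mat n B" shows "mat_sqrt n (B * B) = B"
  unfolding mat_sqrt_def
  by (rule the_equality, insert B sqrt_unique[OF _ B], auto)

lemma mat_sqrt: assumes A: "psd_mat n A"
  shows "psd_mat n (mat_sqrt n A)" "mat_sqrt n A * mat_sqrt n A = A"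
proof -
  from sqrt_exists[OF A] obtain B where B: "psd_mat n B" and BA: "B * B = A" by auto
  show "psd_mat n (mat_sqrt n A)" "mat_sqrt n A * mat_sqrt n A = A"
    unfolding BA[symmetric] mat_sqrt_eq[OF B] using B by auto
qed

lemma pd_sqrt: assumes A: "pd_mat n A" shows "pd_mat n (mat_sqrt n A)"
proof -
  from pd_spec[OF A] obtain U f where U: "unitary n U" and f: "\<forall>i<n. f i > 0"
    and Ad: "A = U * dmat n f * adj U" by auto
  define B where "B = U * dmat n (\<lambda>i. sqrt (f i)) * adj U"
  have pB: "pd_mat n B" unfolding B_def by (rule spec_pd[OF U], insert f, auto)
  have BB: "B * B = A" unfolding B_def Ad by (rule spec_sqrt[OF U], insert f, auto simp: less_imp_le)
  show ?thesis unfolding BB[symmetric] mat_sqrt_eq[OF pd_psd[OF pB]] by (rule pB)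
qed

lemma pd_inv: assumes A: "pd_mat n A"
  shows "pd_mat n (mat_inv n A)" "A * mat_inv n A = 1\<^sub>m n" "mat_inv n A * A = 1\<^sub>m n"
proof -
  from pd_spec[OF A] obtain U f where U: "unitary n U" and f: "\<forall>i<n. f i > 0"
    and Ad: "A = U * dmat n f * adj U" by auto
  note u = unitaryD[OF U]
  define B where "B = U * dmat n (\<lambda>i. 1 / f i) * adj U"
  have pB: "pd_mat n B" unfolding B_def by (rule spec_pd[OF U], insert f, auto)
  have Bc: "B \<in> carrier_mat n n" using pd_carrier[OF pB] .
  have Ac: "A \<in> carrier_mat n n" using pd_carrier[OF A] .
  have "A * B = U * dmat n (\<lambda>i. f i * (1 / f i)) * adj U"
    unfolding Ad B_def conj_mult[OF U dmat_carrier dmat_carrier] dmat_mult_dmat ..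
  also have "dmat n (\<lambda>i. f i * (1 / f i)) = 1\<^sub>m n"
    unfolding dmat_one[symmetric] using f by (intro dmat_cong, auto)
  also have "U * 1\<^sub>m n * adj U = 1\<^sub>m n" using u by simp
  finally have AB: "A * B = 1\<^sub>m n" .
  have inv: "mat_inv n A = B" by (rule mat_inv_eq[OF Ac Bc AB])
  show "pd_mat n (mat_inv n A)" "A * mat_inv n A = 1\<^sub>m n" "mat_inv n A * A = 1\<^sub>m n"
    unfolding inv using pB AB mat_mult_left_right_inverse[OF Ac Bc AB] by auto
qed

lemma mtrace_comm: assumes A: "A \<in> carrier_mat n m" and B: "B \<in> carrier_mat m n"
  shows "mtrace (A * B) = mtrace (B * A)"
proof -
  have "mtrace (A * B) = (\<Sum>i<n. \<Sum>l = 0..<m. A $$ (i,l) * B $$ (l,i))"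
    unfolding mtrace_def using A B by (simp add: scalar_prod_def)
  also have "\<dots> = (\<Sum>l = 0..<m. \<Sum>i<n. A $$ (i,l) * B $$ (l,i))" by (rule sum.swap)
  also have "\<dots> = mtrace (B * A)"
    unfolding mtrace_def using A B by (auto simp: scalar_prod_def atLeast0LessThan mult.commute intro!: sum.cong)
  finally show ?thesis .
qed


lemma smult_mat_vec: assumes "A \<in> carrier_mat n n" "v \<in> carrier_vec n"
  shows "(k \<cdot>\<^sub>m A) *\<^sub>v v = (k::complex) \<cdot>\<^sub>v (A *\<^sub>v v)"
  using assms by (intro eq_vecI, auto simp: scalar_prod_def sum_distrib_left ac_simps)

lemma pd_cong: assumes M: "pd_mat n M" and C: "C \<in> carrier_mat n n" and E: "E \<in> carrier_mat n n"
  and EC: "E * adj C = 1\<^sub>m n"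
  shows "pd_mat n (C * M * adj C)"
proof -
  have Mc: "M \<in> carrier_mat n n" using pd_carrier[OF M] .
  have ps: "psd_mat n (C * M * adj C)" by (rule psd_cong[OF pd_psd[OF M] C])
  show ?thesis unfolding pd_mat_def
  proof (intro conjI ballI impI)
    show "C * M * adj C \<in> carrier_mat n n" using psd_carrier[OF ps] .
    show "hermitian_mat (C * M * adj C)" using ps unfolding psd_mat_def by auto
    fix v :: "complex vec" assume v: "v \<in> carrier_vec n" and v0: "v \<noteq> 0\<^sub>v n"
    have aC: "adj C \<in> carrier_mat n n" using C by simp
    have w: "adj C *\<^sub>v v \<in> carrier_vec n" using mult_mat_vec_carrier[OF aC v] .
    have "E *\<^sub>v (adj C *\<^sub>v v) = (E * adj C) *\<^sub>v v" by (rule assoc_mult_mat_vec[symmetric], insert E aC v, auto)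
    also have "\<dots> = v" unfolding EC using v by simp
    finally have "E *\<^sub>v (adj C *\<^sub>v v) = v" .
    moreover have "E *\<^sub>v 0\<^sub>v n = 0\<^sub>v n" using E by (intro eq_vecI, auto)
    ultimately have w0: "adj C *\<^sub>v v \<noteq> 0\<^sub>v n" using v0 by metis
    hence "0 < Re (conjugate (adj C *\<^sub>v v) \<bullet> (M *\<^sub>v (adj C *\<^sub>v v)))"
      using w M unfolding pd_mat_def by auto
    then show "0 < Re (conjugate v \<bullet> ((C * M * adj C) *\<^sub>v v))"
      unfolding qf_cong[OF C Mc v] .
  qed
qed

lemma pd_convex: assumes A: "pd_mat n A" and B: "pd_mat n B" and t: "0 \<le> t" "t \<le> 1"
  shows "pd_mat n (complex_of_real (1 - t) \<cdot>\<^sub>m A + complex_of_real t \<cdot>\<^sub>m B)"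
proof -
  have Ac: "A \<in> carrier_mat n n" and Bc: "B \<in> carrier_mat n n" using A B pd_carrier by auto
  have hA: "adj A = A" and hB: "adj B = B" using A B pd_herm by auto
  let ?a = "complex_of_real (1 - t)" and ?b = "complex_of_real t"
  show ?thesis unfolding pd_mat_def
  proof (intro conjI ballI impI)
    show "?a \<cdot>\<^sub>m A + ?b \<cdot>\<^sub>m B \<in> carrier_mat n n" using Ac Bc by simp
    have "adj (?a \<cdot>\<^sub>m A + ?b \<cdot>\<^sub>m B) = adj (?a \<cdot>\<^sub>m A) + adj (?b \<cdot>\<^sub>m B)"
      by (rule adj_add[of _ n n], insert Ac Bc, auto)
    also have "\<dots> = ?a \<cdot>\<^sub>m A + ?b \<cdot>\<^sub>m B" unfolding adj_smult hA hB by simp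
    finally show "hermitian_mat (?a \<cdot>\<^sub>m A + ?b \<cdot>\<^sub>m B)" unfolding hermitian_mat_def .
    fix v :: "complex vec" assume v: "v \<in> carrier_vec n" and v0: "v \<noteq> 0\<^sub>v n"
    have Av: "A *\<^sub>v v \<in> carrier_vec n" and Bv: "B *\<^sub>v v \<in> carrier_vec n" using Ac Bc v by auto
    have "(?a \<cdot>\<^sub>m A + ?b \<cdot>\<^sub>m B) *\<^sub>v v = (?a \<cdot>\<^sub>m A) *\<^sub>v v + (?b \<cdot>\<^sub>m B) *\<^sub>v v"
      by (rule add_mult_distrib_mat_vec, insert Ac Bc v, auto)
    also have "\<dots> = ?a \<cdot>\<^sub>v (A *\<^sub>v v) + ?b \<cdot>\<^sub>v (B *\<^sub>v v)"
      unfolding smult_mat_vec[OF Ac v] smult_mat_vec[OF Bc v] ..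
    finally have e: "(?a \<cdot>\<^sub>m A + ?b \<cdot>\<^sub>m B) *\<^sub>v v = ?a \<cdot>\<^sub>v (A *\<^sub>v v) + ?b \<cdot>\<^sub>v (B *\<^sub>v v)" .
    have "conjugate v \<bullet> ((?a \<cdot>\<^sub>m A + ?b \<cdot>\<^sub>m B) *\<^sub>v v)
       = conjugate v \<bullet> (?a \<cdot>\<^sub>v (A *\<^sub>v v)) + conjugate v \<bullet> (?b \<cdot>\<^sub>v (B *\<^sub>v v))"
      unfolding e by (rule scalar_prod_add_distrib[of _ n], insert v Av Bv, auto)
    also have "\<dots> = ?a * (conjugate v \<bullet> (A *\<^sub>v v)) + ?b * (conjugate v \<bullet> (B *\<^sub>v v))"
      using scalar_prod_smult_distrib[of "conjugate v" n "A *\<^sub>v v" ?a]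
        scalar_prod_smult_distrib[of "conjugate v" n "B *\<^sub>v v" ?b] v Av Bv by simp
    finally have e2: "Re (conjugate v \<bullet> ((?a \<cdot>\<^sub>m A + ?b \<cdot>\<^sub>m B) *\<^sub>v v))
       = (1 - t) * Re (conjugate v \<bullet> (A *\<^sub>v v)) + t * Re (conjugate v \<bullet> (B *\<^sub>v v))" by simp
    have qa: "Re (conjugate v \<bullet> (A *\<^sub>v v)) > 0" and qb: "Re (conjugate v \<bullet> (B *\<^sub>v v)) > 0"
      using A B v v0 unfolding pd_mat_def by auto
    show "0 < Re (conjugate v \<bullet> ((?a \<cdot>\<^sub>m A + ?b \<cdot>\<^sub>m B) *\<^sub>v v))"
      unfolding e2
    proof (cases "t = 0")
      case True then show "0 < (1 - t) * Re (conjugate v \<bullet> (A *\<^sub>v v)) + t * Re (conjugate v \<bullet> (B *\<^sub>v v))"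
        using qa by simp
    next
      case False
      hence "t > 0" using t by simp
      hence "t * Re (conjugate v \<bullet> (B *\<^sub>v v)) > 0" using qb by simp
      moreover have "(1 - t) * Re (conjugate v \<bullet> (A *\<^sub>v v)) \<ge> 0" using qa t by simp
      ultimately show "0 < (1 - t) * Re (conjugate v \<bullet> (A *\<^sub>v v)) + t * Re (conjugate v \<bullet> (B *\<^sub>v v))"
        by simp
    qed
  qed
qed

lemma lin_conj: assumes A: "A \<in> carrier_mat n n" and M1: "M1 \<in> carrier_mat n n" and M2: "M2 \<in> carrier_mat n n"
  shows "A * (a \<cdot>\<^sub>m M1 + b \<cdot>\<^sub>m M2) * A = a \<cdot>\<^sub>m (A * M1 * A) + (b::complex) \<cdot>\<^sub>m (A * M2 * A)"
proof -
  have "A * (a \<cdot>\<^sub>m M1 + b \<cdot>\<^sub>m M2) = A * (a \<cdot>\<^sub>m M1) + A * (b \<cdot>\<^sub>m M2)"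
    by (rule mult_add_distrib_mat, insert A M1 M2, auto)
  also have "\<dots> = a \<cdot>\<^sub>m (A * M1) + b \<cdot>\<^sub>m (A * M2)"
    using mult_smult_distrib[OF A M1] mult_smult_distrib[OF A M2] by simp
  finally have "A * (a \<cdot>\<^sub>m M1 + b \<cdot>\<^sub>m M2) = a \<cdot>\<^sub>m (A * M1) + b \<cdot>\<^sub>m (A * M2)" .
  hence "A * (a \<cdot>\<^sub>m M1 + b \<cdot>\<^sub>m M2) * A = (a \<cdot>\<^sub>m (A * M1) + b \<cdot>\<^sub>m (A * M2)) * A" by simp
  also have "\<dots> = (a \<cdot>\<^sub>m (A * M1)) * A + (b \<cdot>\<^sub>m (A * M2)) * A"
    by (rule add_mult_distrib_mat, insert A M1 M2, auto)
  also have "\<dots> = a \<cdot>\<^sub>m (A * M1 * A) + b \<cdot>\<^sub>m (A * M2 * A)"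
    using mult_smult_assoc_mat[OF mult_sq[OF A M1] A] mult_smult_assoc_mat[OF mult_sq[OF A M2] A] by simp
  finally show ?thesis .
qed

lemma lin_left: assumes N: "N \<in> carrier_mat n n" and X: "X \<in> carrier_mat n n"
  shows "(a \<cdot>\<^sub>m 1\<^sub>m n + b \<cdot>\<^sub>m N) * X = a \<cdot>\<^sub>m X + (b::complex) \<cdot>\<^sub>m (N * X)"
    "X * (a \<cdot>\<^sub>m 1\<^sub>m n + b \<cdot>\<^sub>m N) = a \<cdot>\<^sub>m X + (b::complex) \<cdot>\<^sub>m (X * N)"
proof -
  have "(a \<cdot>\<^sub>m 1\<^sub>m n + b \<cdot>\<^sub>m N) * X = (a \<cdot>\<^sub>m 1\<^sub>m n) * X + (b \<cdot>\<^sub>m N) * X"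
    by (rule add_mult_distrib_mat, insert N X, auto)
  also have "\<dots> = a \<cdot>\<^sub>m X + b \<cdot>\<^sub>m (N * X)"
    using mult_smult_assoc_mat[OF one_carrier_mat X] mult_smult_assoc_mat[OF N X] X by simp
  finally show "(a \<cdot>\<^sub>m 1\<^sub>m n + b \<cdot>\<^sub>m N) * X = a \<cdot>\<^sub>m X + (b::complex) \<cdot>\<^sub>m (N * X)" .
  have "X * (a \<cdot>\<^sub>m 1\<^sub>m n + b \<cdot>\<^sub>m N) = X * (a \<cdot>\<^sub>m 1\<^sub>m n) + X * (b \<cdot>\<^sub>m N)"
    by (rule mult_add_distrib_mat, insert N X, auto)
  also have "\<dots> = a \<cdot>\<^sub>m X + b \<cdot>\<^sub>m (X * N)"
    using mult_smult_distrib[OF X one_carrier_mat] mult_smult_distrib[OF X N] X by simp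
  finally show "X * (a \<cdot>\<^sub>m 1\<^sub>m n + b \<cdot>\<^sub>m N) = a \<cdot>\<^sub>m X + (b::complex) \<cdot>\<^sub>m (X * N)" .
qed

lemma tail: assumes "A \<in> carrier_mat n n" "B \<in> carrier_mat n n" "Z \<in> carrier_mat n k" "A * B = C"
  shows "A * (B * Z) = C * Z"
  using assms by (metis assoc_mult_mat)

lemma tl: assumes "A * B = C" "A \<in> carrier_mat n n" "B \<in> carrier_mat n n" "Z \<in> carrier_mat n n"
  shows "A * (B * Z) = C * Z"
  using assms by (metis assoc_mult_mat)

theorem mainTheorem11:
  fixes d :: nat and P Q :: "complex mat" and t :: real
  assumes "pd_mat d P" and "pd_mat d Q"
    and "0 \<le> t" and "t \<le> 1"
  shows "gen_fidelity d
           ((1 - t) \<cdot>\<^sub>m mat_inv d P + t \<cdot>\<^sub>m mat_inv d Q) P Q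
         = matsumoto_fidelity d P Q"
proof -
  note pP = assms(1) and pQ = assms(2) and t = assms(3,4)
  note as = assoc_mult_mat[of _ d d _ d _ d]
  let ?c1 = "complex_of_real (1 - t)" and ?c2 = "complex_of_real t"
  have Pc: "P \<in> carrier_mat d d" and Qc: "Q \<in> carrier_mat d d" using pP pQ pd_carrier by auto
  define Ph where "Ph = mat_sqrt d P"
  have pPh: "pd_mat d Ph" unfolding Ph_def by (rule pd_sqrt[OF pP])
  have PhPh: "Ph * Ph = P" unfolding Ph_def by (rule mat_sqrt(2)[OF pd_psd[OF pP]])
  have Phc: "Ph \<in> carrier_mat d d" and hPh: "adj Ph = Ph" using pPh pd_carrier pd_herm by auto
  define Phi where "Phi = mat_inv d Ph"
  have pPhi: "pd_mat d Phi" and PhPhi: "Ph * Phi = 1\<^sub>m d" and PhiPh: "Phi * Ph = 1\<^sub>m d"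
    unfolding Phi_def using pd_inv[OF pPh] by auto
  have Phic: "Phi \<in> carrier_mat d d" and hPhi: "adj Phi = Phi" using pPhi pd_carrier pd_herm by auto
  define Y where "Y = Phi * Q * Phi"
  have pY: "pd_mat d Y" unfolding Y_def using pd_cong[OF pQ Phic Phc] hPhi PhPhi by simp
  define X where "X = mat_sqrt d Y"
  have pX: "pd_mat d X" unfolding X_def by (rule pd_sqrt[OF pY])
  have XX: "X * X = Y" unfolding X_def by (rule mat_sqrt(2)[OF pd_psd[OF pY]])
  have Xc: "X \<in> carrier_mat d d" and hX: "adj X = X" using pX pd_carrier pd_herm by auto
  define Xi where "Xi = mat_inv d X"
  have XXi: "X * Xi = 1\<^sub>m d" and XiX: "Xi * X = 1\<^sub>m d" unfolding Xi_def using pd_inv[OF pX] by auto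
  have Xic: "Xi \<in> carrier_mat d d" unfolding Xi_def using pd_inv(1)[OF pX] pd_carrier by auto
  have geo: "mat_geo_mean d P Q = Ph * X * Ph"
    unfolding mat_geo_mean_def Let_def Ph_def[symmetric] Phi_def[symmetric] Y_def[symmetric] X_def[symmetric] ..
  have QX: "Q = Ph * (X * (X * Ph))"
  proof -
    have "X * (X * Ph) = Y * Ph" using tail[OF Xc Xc Phc XX] .
    also have "\<dots> = Phi * (Q * (Phi * Ph))" unfolding Y_def using Phic Qc Phc by (simp add: as)
    finally have "Ph * (X * (X * Ph)) = Ph * (Phi * (Q * (Phi * Ph)))" by simp
    also have "\<dots> = Q" unfolding PhiPh using tail[OF Phc Phic Qc PhPhi] Qc by simp
    finally show ?thesis by simp
  qed
  have Pinv: "mat_inv d P = Phi * Phi"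
  proof (rule mat_inv_eq[OF Pc])
    show "Phi * Phi \<in> carrier_mat d d" using Phic by simp
    have "P * (Phi * Phi) = Ph * (Ph * (Phi * Phi))" unfolding PhPh[symmetric] using Phc Phic by (simp add: as)
    also have "\<dots> = 1\<^sub>m d" using tail[OF Phc Phic Phic PhPhi] PhPhi Phic by simp
    finally show "P * (Phi * Phi) = 1\<^sub>m d" .
  qed
  have Qinv: "mat_inv d Q = Phi * (Xi * (Xi * Phi))"
  proof (rule mat_inv_eq[OF Qc])
    show "Phi * (Xi * (Xi * Phi)) \<in> carrier_mat d d" using Phic Xic by simp
    have "Q * (Phi * (Xi * (Xi * Phi))) = Ph * (X * (X * (Ph * (Phi * (Xi * (Xi * Phi))))))"
      unfolding QX using Phc Phic Xc Xic by (simp add: as)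
    also have "Ph * (Phi * (Xi * (Xi * Phi))) = Xi * (Xi * Phi)"
      using tail[OF Phc Phic mult_sq[OF Xic mult_sq[OF Xic Phic]] PhPhi] Xic Phic by simp
    also have "X * (Xi * (Xi * Phi)) = Xi * Phi" using tl[OF XXi Xc Xic, of "Xi * Phi"] Xic Phic by simp
    also have "X * (Xi * Phi) = Phi" using tl[OF XXi Xc Xic, of Phi] Phic by simp
    also have "Ph * Phi = 1\<^sub>m d" by (rule PhPhi)
    finally show "Q * (Phi * (Xi * (Xi * Phi))) = 1\<^sub>m d" .
  qed
  define R where "R = ?c1 \<cdot>\<^sub>m mat_inv d P + ?c2 \<cdot>\<^sub>m mat_inv d Q"
  have pR: "pd_mat d R" unfolding R_def by (rule pd_convex[OF pd_inv(1)[OF pP] pd_inv(1)[OF pQ] t])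
  have Rc: "R \<in> carrier_mat d d" using pR pd_carrier by auto
  define K where "K = ?c1 \<cdot>\<^sub>m 1\<^sub>m d + ?c2 \<cdot>\<^sub>m (Xi * Xi)"
  have Kc: "K \<in> carrier_mat d d" unfolding K_def using Xic by simp
  have PRP: "Ph * R * Ph = K"
  proof -
    have "Ph * R * Ph = ?c1 \<cdot>\<^sub>m (Ph * (Phi * Phi) * Ph) + ?c2 \<cdot>\<^sub>m (Ph * (Phi * (Xi * (Xi * Phi))) * Ph)"
      unfolding R_def Pinv Qinv by (rule lin_conj, insert Phc Phic Xic, auto)
    also have "Ph * (Phi * Phi) * Ph = 1\<^sub>m d"
      using Phc Phic tail[OF Phc Phic _ PhPhi] PhiPh by (simp add: as)
    also have "Ph * (Phi * (Xi * (Xi * Phi))) * Ph = Xi * Xi"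
    proof -
      have "Ph * (Phi * (Xi * (Xi * Phi))) * Ph = Ph * (Phi * (Xi * (Xi * (Phi * Ph))))"
        using Phc Phic Xic by (simp add: as)
      also have "\<dots> = Xi * Xi" unfolding PhiPh using tl[OF PhPhi Phc Phic, of "Xi * Xi"] Xic by (simp add: as)
      finally show ?thesis .
    qed
    finally show ?thesis unfolding K_def .
  qed
  have pK: "pd_mat d K" unfolding PRP[symmetric]
    using pd_cong[OF pR Phc Phic] hPh PhiPh by simp
  have KX: "K * X = X * K"
  proof -
    have "K * X = ?c1 \<cdot>\<^sub>m X + ?c2 \<cdot>\<^sub>m (Xi * Xi * X)" unfolding K_def by (rule lin_left(1), insert Xic Xc, auto)
    also have "Xi * Xi * X = Xi" using Xic Xc XiX by (simp add: as)
    also have "?c1 \<cdot>\<^sub>m X + ?c2 \<cdot>\<^sub>m Xi = ?c1 \<cdot>\<^sub>m X + ?c2 \<cdot>\<^sub>m (X * (Xi * Xi))"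
      using tail[OF Xc Xic Xic XXi] Xic by simp
    also have "\<dots> = X * K" unfolding K_def by (rule lin_left(2)[symmetric], insert Xic Xc, auto)
    finally show ?thesis .
  qed
  define Ki where "Ki = mat_inv d K"
  have pKi: "pd_mat d Ki" and KKi: "K * Ki = 1\<^sub>m d" and KiK: "Ki * K = 1\<^sub>m d"
    unfolding Ki_def using pd_inv[OF pK] by auto
  have Kic: "Ki \<in> carrier_mat d d" using pKi pd_carrier by auto
  have KiX: "X * Ki = Ki * X"
  proof -
    have "Ki * X = Ki * (X * (K * Ki))" unfolding KKi using Xc by simp
    also have "\<dots> = Ki * (K * (X * Ki))" using Kc Xc Kic tl[OF KX[symmetric] Xc Kc, of Ki] by (simp add: as)
    also have "\<dots> = X * Ki" using tl[OF KiK Kic Kc, of "X * Ki"] Xc Kic by simp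
    finally show ?thesis by simp
  qed
  define L where "L = mat_sqrt d Ki"
  have pL: "pd_mat d L" unfolding L_def by (rule pd_sqrt[OF pKi])
  have LL: "L * L = Ki" unfolding L_def by (rule mat_sqrt(2)[OF pd_psd[OF pKi]])
  have Lc: "L \<in> carrier_mat d d" and hL: "adj L = L" using pL pd_carrier pd_herm by auto
  have XL: "X * L = L * X" by (rule psd_commute_sqrt[OF pd_psd[OF pL] Xc], unfold LL, rule KiX)
  have LK: "K * L = L * K"
  proof -
    have LKi: "L * Ki = Ki * L" unfolding LL[symmetric] using Lc by (simp add: as)
    have "K * L = K * (L * (Ki * K))" unfolding KiK using Lc by simp
    also have "\<dots> = K * (Ki * (L * K))" using tail[OF Lc Kic Kc LKi] Lc Kic Kc by (simp add: as)
    also have "\<dots> = L * K" using tl[OF KKi Kc Kic, of "L * K"] Lc Kc by simp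
    finally show ?thesis .
  qed
  have LKL: "L * (K * L) = 1\<^sub>m d"
  proof -
    have "L * (K * L) = L * (L * K)" unfolding LK ..
    also have "\<dots> = Ki * K" using tail[OF Lc Lc Kc LL] .
    finally show ?thesis using KiK by simp
  qed
  have LKLt: "L * (K * (L * Z)) = Z" if Z: "Z \<in> carrier_mat d d" for Z
  proof -
    have "L * (K * (L * Z)) = (L * (K * L)) * Z" using Lc Kc Z by (simp add: as)
    thus ?thesis unfolding LKL using Z by simp
  qed
  define M where "M = mat_sqrt d L"
  have pM: "psd_mat d M" and MM: "M * M = L" unfolding M_def using mat_sqrt[OF pd_psd[OF pL]] by auto
  have Mc: "M \<in> carrier_mat d d" and hM: "adj M = M" using pM psd_carrier psd_herm by auto
  have XM: "X * M = M * X" by (rule psd_commute_sqrt[OF pM Xc], unfold MM, rule XL)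
  have pLX: "psd_mat d (L * X)"
  proof -
    have "L * X = M * X * adj M" unfolding hM MM[symmetric] using Mc Xc XM by (simp add: as)
    then show ?thesis using psd_cong[OF pd_psd[OF pX] Mc] by simp
  qed
  define Rh where "Rh = mat_sqrt d R"
  have pRh: "pd_mat d Rh" unfolding Rh_def by (rule pd_sqrt[OF pR])
  have RhRh: "Rh * Rh = R" unfolding Rh_def by (rule mat_sqrt(2)[OF pd_psd[OF pR]])
  have Rhc: "Rh \<in> carrier_mat d d" and hRh: "adj Rh = Rh" using pRh pd_carrier pd_herm by auto
  define Ri where "Ri = mat_inv d R"
  have RRi: "R * Ri = 1\<^sub>m d" and Ric: "Ri \<in> carrier_mat d d"
    unfolding Ri_def using pd_inv[OF pR] pd_carrier by auto
  define Rhi where "Rhi = mat_inv d Rh"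
  have RhiRh: "Rhi * Rh = 1\<^sub>m d" and Rhic: "Rhi \<in> carrier_mat d d"
    unfolding Rhi_def using pd_inv[OF pRh] pd_carrier by auto
  have RhRiRh: "Rh * (Ri * Rh) = 1\<^sub>m d"
  proof -
    have "Rh * (Rh * (Ri * Rh)) = Rh" using tl[OF RhRh Rhc Rhc, of "Ri * Rh"] tl[OF RRi Rc Ric, of Rh] Ric Rhc
      by (simp add: as)
    hence "Rhi * (Rh * (Rh * (Ri * Rh))) = Rhi * Rh" by simp
    thus ?thesis using tl[OF RhiRh Rhic Rhc, of "Rh * (Ri * Rh)"] RhiRh Rhc Ric by simp
  qed
  have RhRiRht: "Rh * (Ri * (Rh * Z)) = Z" if Z: "Z \<in> carrier_mat d d" for Z
  proof -
    have "Rh * (Ri * (Rh * Z)) = (Rh * (Ri * Rh)) * Z" using Rhc Ric Z by (simp add: as)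
    thus ?thesis unfolding RhRiRh using Z by simp
  qed
  have PRPt: "Ph * (Rh * (Rh * (Ph * Z))) = K * Z" if Z: "Z \<in> carrier_mat d d" for Z
  proof -
    have "Ph * (Rh * (Rh * (Ph * Z))) = (Ph * R * Ph) * Z" unfolding RhRh[symmetric] using Phc Rhc Z by (simp add: as)
    thus ?thesis unfolding PRP .
  qed
  define C where "C = Rh * Ph"
  have Cc: "C \<in> carrier_mat d d" unfolding C_def using Rhc Phc by simp
  have aC: "adj C = Ph * Rh" unfolding C_def using adj_mult[OF Rhc Phc] hRh hPh by simp
  define SP where "SP = C * L * adj C"
  define SQ where "SQ = C * (L * X) * adj C"
  have pSP: "psd_mat d SP" unfolding SP_def by (rule psd_cong[OF pd_psd[OF pL] Cc])
  have pSQ: "psd_mat d SQ" unfolding SQ_def by (rule psd_cong[OF pLX Cc])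
  have SPr: "SP = Rh * (Ph * (L * (Ph * Rh)))" unfolding SP_def aC unfolding C_def using Rhc Phc Lc by (simp add: as)
  have SQr: "SQ = Rh * (Ph * (L * (X * (Ph * Rh))))" unfolding SQ_def aC unfolding C_def using Rhc Phc Lc Xc by (simp add: as)
  have SPSP: "SP * SP = Rh * P * Rh"
  proof -
    have "SP * SP = Rh * (Ph * (L * (Ph * (Rh * (Rh * (Ph * (L * (Ph * Rh))))))))"
      unfolding SPr using Rhc Phc Lc by (simp add: as)
    also have "Ph * (Rh * (Rh * (Ph * (L * (Ph * Rh))))) = K * (L * (Ph * Rh))"
      by (rule PRPt, insert Lc Phc Rhc, simp)
    also have "L * (K * (L * (Ph * Rh))) = Ph * Rh" using LKLt[of "Ph * Rh"] Kc Lc Phc Rhc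
      by (simp add: as)
    also have "Rh * (Ph * (Ph * Rh)) = Rh * P * Rh" unfolding PhPh[symmetric] using Rhc Phc by (simp add: as)
    finally show ?thesis .
  qed
  have SQSQ: "SQ * SQ = Rh * Q * Rh"
  proof -
    have "SQ * SQ = Rh * (Ph * (L * (X * (Ph * (Rh * (Rh * (Ph * (L * (X * (Ph * Rh))))))))))"
      unfolding SQr using Rhc Phc Lc Xc by (simp add: as)
    also have "Ph * (Rh * (Rh * (Ph * (L * (X * (Ph * Rh)))))) = K * (L * (X * (Ph * Rh)))"
      by (rule PRPt, insert Lc Phc Rhc Xc, simp)
    also have "X * (K * (L * (X * (Ph * Rh)))) = K * (X * (L * (X * (Ph * Rh))))"
      using tl[OF KX[symmetric] Xc Kc, of "L * (X * (Ph * Rh))"] Kc Lc Xc Phc Rhc by (simp add: as)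
    also have "X * (L * (X * (Ph * Rh))) = L * (X * (X * (Ph * Rh)))"
      using tl[OF XL Xc Lc, of "X * (Ph * Rh)"] Lc Xc Phc Rhc by (simp add: as)
    also have "L * (K * (L * (X * (X * (Ph * Rh))))) = X * (X * (Ph * Rh))"
      using LKLt[of "X * (X * (Ph * Rh))"] Kc Lc Xc Phc Rhc by (simp add: as)
    also have "Rh * (Ph * (X * (X * (Ph * Rh)))) = Rh * Q * Rh"
      unfolding QX using Rhc Phc Xc by (simp add: as)
    finally show ?thesis .
  qed
  have sP: "mat_sqrt d (Rh * P * Rh) = SP" unfolding SPSP[symmetric] by (rule mat_sqrt_eq[OF pSP])
  have sQ: "mat_sqrt d (Rh * Q * Rh) = SQ" unfolding SQSQ[symmetric] by (rule mat_sqrt_eq[OF pSQ])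
  have "gen_fidelity d R P Q = mtrace (SP * Ri * SQ)"
    unfolding gen_fidelity_def Let_def Rh_def[symmetric] sP sQ Ri_def ..
  also have "SP * Ri * SQ = (Rh * (Ph * (L * (P * (L * X))))) * (Ph * Rh)"
  proof -
    have "SP * Ri * SQ = Rh * (Ph * (L * (Ph * (Rh * (Ri * (Rh * (Ph * (L * (X * (Ph * Rh))))))))))"
      unfolding SPr SQr using Rhc Phc Lc Xc Ric by (simp add: as)
    also have "Rh * (Ri * (Rh * (Ph * (L * (X * (Ph * Rh)))))) = Ph * (L * (X * (Ph * Rh)))"
      using RhRiRht[of "Ph * (L * (X * (Ph * Rh)))"] Ric Rhc Phc Lc Xc by (simp add: as)
    also have "Ph * (Ph * (L * (X * (Ph * Rh)))) = P * (L * (X * (Ph * Rh)))"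
      using tl[OF PhPh Phc Phc, of "L * (X * (Ph * Rh))"] Lc Xc Phc Rhc by simp
    finally show ?thesis using Rhc Phc Lc Xc Pc by (simp add: as)
  qed
  also have "mtrace \<dots> = mtrace ((Ph * Rh) * (Rh * (Ph * (L * (P * (L * X))))))"
    by (rule mtrace_comm, insert Rhc Phc Lc Xc Pc, auto)
  also have "(Ph * Rh) * (Rh * (Ph * (L * (P * (L * X))))) = K * (L * (P * (L * X)))"
    using PRPt[of "L * (P * (L * X))"] Rhc Phc Lc Xc Pc by (simp add: as)
  also have "mtrace \<dots> = mtrace ((P * (L * X)) * (K * L))"
    using mtrace_comm[of "K * L" d d "P * (L * X)"] Kc Lc Pc Xc by (simp add: as)
  also have "(P * (L * X)) * (K * L) = P * X"
  proof -
    have "(P * (L * X)) * (K * L) = P * (X * (L * (K * L)))"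
      unfolding XL[symmetric] using Pc Lc Xc Kc by (simp add: as)
    also have "\<dots> = P * X" unfolding LKL using Xc by simp
    finally show ?thesis .
  qed
  also have "mtrace (P * X) = mtrace (Ph * X * Ph)"
  proof -
    have "mtrace (Ph * X * Ph) = mtrace (Ph * (X * Ph))" using Phc Xc by (simp add: as)
    also have "\<dots> = mtrace ((X * Ph) * Ph)" by (rule mtrace_comm, insert Phc Xc, auto)
    also have "(X * Ph) * Ph = X * P" unfolding PhPh[symmetric] using Phc Xc by (simp add: as)
    also have "mtrace (X * P) = mtrace (P * X)" by (rule mtrace_comm, insert Pc Xc, auto)
    finally show ?thesis by simp
  qed
  also have "\<dots> = matsumoto_fidelity d P Q" unfolding matsumoto_fidelity_def geo ..
  finally have "gen_fidelity d R P Q = matsumoto_fidelity d P Q" .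
  then show ?thesis by (simp only: R_def)
qed

end
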